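(* Let $\kappa$ and $\lambda$ be positive integers, $p$ a prime number, $x \in \mathbb{Z}_p$ a $p$-adic integer that is algebraic over $\mathbb{Q}$, and $(x_n)_{n\ge1}$ a nondecreasing sequence of positive integers such that $x_n \equiv x \pmod{p^n}$ in $\mathbb{Z}_p$ for every $n$. If $(x_n)$ is not eventually constant, then $x_n \ge \lambda n + \kappa$ for every sufficiently large $n$. *)

theory Defs
  imports "HOL-Computational_Algebra.Polynomial" "HOL-Number_Theory.Cong"
begin

text \<open>The p-adic integers Z_p, realised as the inverse limit of Z/p^n Z:
  a p-adic integer is the compatible sequence of its canonical residues
  a n in {0..<p^n}, with a (n+1) reduced mod p^n equal to a n.\<close>
definition padic_int :: "int \<Rightarrow> (nat \<Rightarrow> int) set" where
  "padic_int p = {a. \<forall>n. 0 \<le> a n \<and> a n < p ^ n \<and> a (Suc n) mod p ^ n = a n}"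

definition padic_cong :: "int \<Rightarrow> nat \<Rightarrow> int \<Rightarrow> (nat \<Rightarrow> int) \<Rightarrow> bool" where
  "padic_cong p n m a \<longleftrightarrow> [m = a n] (mod p ^ n)"

text \<open>A p-adic integer is algebraic over Q iff it is a root of a nonzero
  polynomial with rational (equivalently, after clearing denominators, integer)
  coefficients; P(a) = 0 in Z_p means P(a) = 0 mod p^n for all n.\<close>
definition padic_algebraic :: "int \<Rightarrow> (nat \<Rightarrow> int) \<Rightarrow> bool" where
  "padic_algebraic p a \<longleftrightarrow>
     (\<exists>P :: int poly. P \<noteq> 0 \<and> (\<forall>n. [poly P (a n) = 0] (mod p ^ n)))"

end

theory Submission
  imports Defs "HOL-Real_Asymp.Real_Asymp"
begin

lemma poly_cong_int:
  fixes P :: "int poly"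
  assumes "[a = b] (mod m)"
  shows "[poly P a = poly P b] (mod m)"
proof (induction P)
  case 0
  then show ?case by simp
next
  case (pCons c q)
  then show ?case using assms
    by (simp add: cong_add cong_mult)
qed

lemma poly_abs_bound:
  fixes P :: "int poly" and y :: int
  assumes "1 \<le> \<bar>y\<bar>"
  shows "\<bar>poly P y\<bar> \<le> (\<Sum>i\<le>degree P. \<bar>coeff P i\<bar>) * \<bar>y\<bar> ^ degree P"
proof -
  have "\<bar>poly P y\<bar> = \<bar>\<Sum>i\<le>degree P. coeff P i * y ^ i\<bar>"
    by (simp add: poly_altdef)
  also have "\<dots> \<le> (\<Sum>i\<le>degree P. \<bar>coeff P i * y ^ i\<bar>)"
    by (rule sum_abs)
  also have "\<dots> \<le> (\<Sum>i\<le>degree P. \<bar>coeff P i\<bar> * \<bar>y\<bar> ^ degree P)"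
  proof (rule sum_mono)
    fix i assume "i \<in> {..degree P}"
    then have "\<bar>y\<bar> ^ i \<le> \<bar>y\<bar> ^ degree P"
      using assms by (intro power_increasing) auto
    then show "\<bar>coeff P i * y ^ i\<bar> \<le> \<bar>coeff P i\<bar> * \<bar>y\<bar> ^ degree P"
      by (simp add: abs_mult power_abs mult_left_mono)
  qed
  also have "\<dots> = (\<Sum>i\<le>degree P. \<bar>coeff P i\<bar>) * \<bar>y\<bar> ^ degree P"
    by (simp add: sum_distrib_right)
  finally show ?thesis .
qed

theorem lemma4p6:
  fixes kappa lam p :: int and x :: "nat \<Rightarrow> int" and X :: "nat \<Rightarrow> int"
  assumes "kappa > 0" and "lam > 0"
    and "prime p"
    and "x \<in> padic_int p"
    and "padic_algebraic p x"
    and "\<forall>n\<ge>1. X n > 0"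
    and "\<forall>n\<ge>1. X n \<le> X (Suc n)"
    and "\<forall>n\<ge>1. padic_cong p n (X n) x"
    and "\<not> (\<exists>N. \<forall>n\<ge>N. X n = X N)"
  shows "\<exists>N. \<forall>n\<ge>N. X n \<ge> lam * int n + kappa"
proof -
  obtain P :: "int poly" where P0: "P \<noteq> 0" and Px: "\<forall>n. [poly P (x n) = 0] (mod p ^ n)"
    using assms(5) unfolding padic_algebraic_def by blast
  have dvdP: "p ^ n dvd poly P (X n)" if "n \<ge> 1" for n
  proof -
    have "[X n = x n] (mod p ^ n)" using assms(8) that unfolding padic_cong_def by blast
    then have "[poly P (X n) = poly P (x n)] (mod p ^ n)" by (rule poly_cong_int)
    with Px have "[poly P (X n) = 0] (mod p ^ n)" using cong_trans by blast
    then show ?thesis by (simp add: cong_0_iff)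
  qed
  have mono: "X n \<le> X m" if "1 \<le> n" "n \<le> m" for n m
    using that(2,1)
  proof (induction m rule: dec_induct)
    case base then show ?case by simp
  next
    case (step m) then show ?case using assms(7) by (meson order_trans le_trans)
  qed
  have unb: "\<exists>n\<ge>1. X n > B" for B
  proof (rule ccontr)
    assume "\<not> ?thesis"
    then have bnd: "\<forall>n\<ge>1. X n \<le> B" by auto
    let ?S = "X ` {1..}"
    have "?S \<subseteq> {X 1..B}" using bnd mono by auto
    then have fin: "finite ?S" by (rule finite_subset) simp
    have ne: "?S \<noteq> {}" by auto
    obtain N where N: "N \<ge> 1" "X N = Max ?S" using Max_in[OF fin ne] by auto
    have "\<forall>n\<ge>N. X n = X N"
    proof (intro allI impI)
      fix n assume "n \<ge> N"
      then have "X N \<le> X n" using mono[of N n] N(1) by simp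
      moreover have "X n \<le> Max ?S" using fin \<open>n \<ge> N\<close> N by (intro Max_ge) auto
      ultimately show "X n = X N" using N by simp
    qed
    then show False using assms(9) by blast
  qed
  have finR: "finite {y. poly P y = 0}" using poly_roots_finite[OF P0] .
  obtain B0 where B0: "\<forall>y\<in>{y. poly P y = 0}. y \<le> B0"
    using finR bdd_above_finite[OF finR] unfolding bdd_above_def by blast
  obtain n0 where n0: "n0 \<ge> 1" "X n0 > B0" using unb by blast
  have nz: "poly P (X n) \<noteq> 0" if "n \<ge> n0" for n
  proof
    assume "poly P (X n) = 0"
    then have "X n \<le> B0" using B0 by auto
    moreover have "X n0 \<le> X n" using mono n0 that by auto
    ultimately show False using n0 by simp
  qed
  define C where "C = (\<Sum>i\<le>degree P. \<bar>coeff P i\<bar>)"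
  define d where "d = degree P"
  have Cpos: "C \<ge> 0" unfolding C_def by (intro sum_nonneg) auto
  have ev: "eventually (\<lambda>n::nat. real_of_int (C + 1) * (real_of_int lam * real n + real_of_int kappa) powr real d
              < 2 powr real n) sequentially"
    using Cpos assms(1,2) by real_asymp
  then obtain N1 where N1: "\<And>n. n \<ge> N1 \<Longrightarrow> real_of_int (C + 1) * (real_of_int lam * real n + real_of_int kappa) powr real d
              < 2 powr real n"
    unfolding eventually_sequentially by blast
  have p2: "p \<ge> 2" using assms(3) by (simp add: prime_ge_2_int)
  show ?thesis
  proof (intro exI[of _ "max N1 n0"] allI impI)
    fix n assume n: "n \<ge> max N1 n0"
    show "X n \<ge> lam * int n + kappa"
    proof (rule ccontr)
      assume "\<not> ?thesis"
      then have lt: "X n < lam * int n + kappa" by simp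
      have n1: "n \<ge> 1" using n n0 by auto
      have Xpos: "X n > 0" using assms(6) n1 by auto
      have "\<bar>poly P (X n)\<bar> \<ge> p ^ n"
      proof -
        have "p ^ n dvd \<bar>poly P (X n)\<bar>" using dvdP[OF n1] by simp
        moreover have "\<bar>poly P (X n)\<bar> > 0" using nz n by auto
        moreover have "p ^ n > 0" using p2 by simp
        ultimately show ?thesis by (simp add: zdvd_imp_le)
      qed
      moreover have "p ^ n \<ge> 2 ^ n" using p2 by (simp add: power_mono)
      moreover have "\<bar>poly P (X n)\<bar> \<le> C * X n ^ d"
        using poly_abs_bound[of "X n" P] Xpos unfolding C_def d_def by simp
      moreover have "C * X n ^ d \<le> (C + 1) * (lam * int n + kappa) ^ d"
        using Xpos lt Cpos by (intro mult_mono power_mono) auto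
      ultimately have A: "(2::int) ^ n \<le> (C + 1) * (lam * int n + kappa) ^ d" by linarith
      have pos: "real_of_int lam * real n + real_of_int kappa > 0"
        using assms(1,2) by (simp add: add_nonneg_pos)
      have "real_of_int (C + 1) * (real_of_int lam * real n + real_of_int kappa) ^ d < 2 ^ n"
        using N1[of n] n pos by (simp add: powr_realpow)
      moreover have "real_of_int ((2::int) ^ n) \<le> real_of_int ((C + 1) * (lam * int n + kappa) ^ d)"
        using A by linarith
      ultimately show False by simp
    qed
  qed
qed

end
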